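(* Let $A\in\mathbb{R}^{m\times n}$ be semimonotone ($A^{\dagger}\geq 0$) and let $(U_k,V_k,E_k)_{k=1}^{p}$ be a proper weak regular multisplitting of $A$. Let $H=\sum_{k=1}^{p}E_kU_k^{\dagger}V_k$ and let $A=B-C$ be the splitting induced by $H$, where $B=A(I-H)^{-1}$ and $C=B-A$. If $A\geq 0$ and $R(E_k)\subseteq R(A^{T})$ for each $k=1,\ldots,p$, then $A=B-C$ is a proper regular splitting.
   Context: $A^{\dagger}$ denotes the Moore–Penrose inverse, $R(\cdot)$, $N(\cdot)$ range and null space; inequalities are entrywise. A splitting $A=U-V$ is proper if $R(U)=R(A)$ and $N(U)=N(A)$; a proper splitting is proper weak regular if $U^{\dagger}\geq 0$ and $U^{\dagger}V\geq 0$, and proper regular if $U^{\dagger}\geq 0$ and $V\geq 0$. A proper weak regular multisplitting of $A$ is a triplet $(U_k,V_k,E_k)_{k=1}^{p}$ where each $A=U_k-V_k$ is a proper weak regular splitting and each $E_k\geq 0$ is an $n\times n$ diagonal matrix with $\sum_{k=1}^{p}E_k=I_n$. Under these hypotheses $I-H$ is invertible and $B^{\dagger}C=H$. *)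

theory Defs
  imports "HOL-Analysis.Analysis"
begin

text \<open>Matrices A of size m x n are represented as real^'n^'m (rows indexed by 'm).\<close>

definition mp_inverse :: "real^'n^'m \<Rightarrow> real^'m^'n" where
  "mp_inverse A = (THE X. A ** X ** A = A \<and> X ** A ** X = X \<and>
                          transpose (A ** X) = A ** X \<and> transpose (X ** A) = X ** A)"

definition nonneg_mat :: "real^'n^'m \<Rightarrow> bool" where
  "nonneg_mat A \<longleftrightarrow> (\<forall>i j. 0 \<le> A $ i $ j)"

definition col_range :: "real^'n^'m \<Rightarrow> (real^'m) set" where
  "col_range A = range (\<lambda>x. A *v x)"

definition null_space :: "real^'n^'m \<Rightarrow> (real^'n) set" where
  "null_space A = {x. A *v x = 0}"

definition proper_splitting :: "real^'n^'m \<Rightarrow> real^'n^'m \<Rightarrow> real^'n^'m \<Rightarrow> bool" where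
  "proper_splitting A U V \<longleftrightarrow> A = U - V \<and> col_range U = col_range A \<and> null_space U = null_space A"

definition proper_weak_regular_splitting :: "real^'n^'m \<Rightarrow> real^'n^'m \<Rightarrow> real^'n^'m \<Rightarrow> bool" where
  "proper_weak_regular_splitting A U V \<longleftrightarrow> proper_splitting A U V \<and>
     nonneg_mat (mp_inverse U) \<and> nonneg_mat (mp_inverse U ** V)"

definition proper_regular_splitting :: "real^'n^'m \<Rightarrow> real^'n^'m \<Rightarrow> real^'n^'m \<Rightarrow> bool" where
  "proper_regular_splitting A U V \<longleftrightarrow> proper_splitting A U V \<and>
     nonneg_mat (mp_inverse U) \<and> nonneg_mat V"

definition diagonal_mat :: "real^'n^'n \<Rightarrow> bool" where
  "diagonal_mat E \<longleftrightarrow> (\<forall>i j. i \<noteq> j \<longrightarrow> E $ i $ j = 0)"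

definition proper_weak_regular_multisplitting ::
  "real^'n^'m \<Rightarrow> nat \<Rightarrow> (nat \<Rightarrow> real^'n^'m) \<Rightarrow> (nat \<Rightarrow> real^'n^'m) \<Rightarrow> (nat \<Rightarrow> real^'n^'n) \<Rightarrow> bool" where
  "proper_weak_regular_multisplitting A p U V E \<longleftrightarrow>
     (\<forall>k<p. proper_weak_regular_splitting A (U k) (V k) \<and> nonneg_mat (E k) \<and> diagonal_mat (E k))
     \<and> (\<Sum>k<p. E k) = mat 1"

definition multisplitting_H ::
  "nat \<Rightarrow> (nat \<Rightarrow> real^'n^'m) \<Rightarrow> (nat \<Rightarrow> real^'n^'m) \<Rightarrow> (nat \<Rightarrow> real^'n^'n) \<Rightarrow> real^'n^'n" where
  "multisplitting_H p U V E = (\<Sum>k<p. E k ** mp_inverse (U k) ** V k)"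

end

theory Submission
  imports Defs
begin


definition pen :: "real^'n^'m \<Rightarrow> real^'m^'n \<Rightarrow> bool" where
  "pen A X \<longleftrightarrow> A ** X ** A = A \<and> X ** A ** X = X \<and>
                          transpose (A ** X) = A ** X \<and> transpose (X ** A) = X ** A"

lemma mm_rdistrib: "((A::real^'n^'m) + B) ** (C::real^'p^'n) = A ** C + B ** C"
  by (vector matrix_matrix_mult_def sum.distrib[symmetric] field_simps)
lemma mm_ldiff: "(A::real^'n^'m) ** ((B::real^'p^'n) - C) = A ** B - A ** C"
  by (vector matrix_matrix_mult_def sum_subtractf[symmetric] field_simps)
lemma mm_rdiff: "((A::real^'n^'m) - B) ** (C::real^'p^'n) = A ** C - B ** C"
  by (vector matrix_matrix_mult_def sum_subtractf[symmetric] field_simps)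

lemma pen_unique:
  assumes X: "pen A X" and Y: "pen A Y" shows "X = Y"
proof -
  have a1: "A ** X ** A = A" "X ** A ** X = X" "transpose (A ** X) = A ** X" "transpose (X ** A) = X ** A"
    using X unfolding pen_def by auto
  have b1: "A ** Y ** A = A" "Y ** A ** Y = Y" "transpose (A ** Y) = A ** Y" "transpose (Y ** A) = Y ** A"
    using Y unfolding pen_def by auto
  have "X = X ** (A ** X)" using a1 by (simp add: matrix_mul_assoc)
  also have "\<dots> = X ** transpose (A ** X)" using a1 by simp
  also have "\<dots> = X ** transpose X ** transpose A" by (simp add: matrix_transpose_mul matrix_mul_assoc)
  also have "transpose A = transpose (A ** Y ** A)" using b1 by simp
  also have "X ** transpose X ** transpose (A ** Y ** A) = X ** (transpose (A ** X) ** transpose (A ** Y))"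
    by (simp add: matrix_transpose_mul matrix_mul_assoc)
  also have "\<dots> = (X ** A ** X) ** A ** Y" using a1 b1 by (simp add: matrix_mul_assoc)
  also have "\<dots> = X ** A ** Y" using a1 by simp
  finally have 1: "X = X ** A ** Y" .
  have "Y = (Y ** A) ** Y" using b1 by simp
  also have "\<dots> = transpose (Y ** A) ** Y" using b1 by simp
  also have "\<dots> = transpose A ** transpose Y ** Y" by (simp add: matrix_transpose_mul)
  also have "transpose A = transpose (A ** X ** A)" using a1 by simp
  also have "transpose (A ** X ** A) ** transpose Y ** Y = transpose (X ** A) ** transpose (Y ** A) ** Y"
    by (simp add: matrix_transpose_mul matrix_mul_assoc)
  also have "\<dots> = X ** (A ** Y ** A) ** Y" using a1 b1 by (metis matrix_mul_assoc)
  also have "\<dots> = X ** A ** Y" using b1 by simp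
  finally show ?thesis using 1 by simp
qed

lemma proj_unique:
  fixes S :: "'a::euclidean_space set"
  assumes S: "subspace S" and a: "a \<in> S" "\<forall>w\<in>S. (y - a) \<bullet> w = 0"
    and b: "b \<in> S" "\<forall>w\<in>S. (y - b) \<bullet> w = 0"
  shows "a = b"
proof -
  have d: "b - a \<in> S" using S a b by (simp add: subspace_diff)
  have "(y - a) \<bullet> (b - a) - (y - b) \<bullet> (b - a) = 0" using a b d by simp
  then have "(b - a) \<bullet> (b - a) = 0" by (simp add: inner_diff_left inner_diff_right inner_commute)
  then show ?thesis by simp
qed

lemma proj_exists:
  fixes S :: "'a::euclidean_space set"
  assumes S: "subspace S"
  shows "\<exists>p. linear p \<and> (\<forall>y. p y \<in> S \<and> (\<forall>w\<in>S. (y - p y) \<bullet> w = 0))"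
proof -
  have ex: "\<exists>a. a \<in> S \<and> (\<forall>w\<in>S. (y - a) \<bullet> w = 0)" for y
  proof -
    obtain a z where "a \<in> span S" "\<And>w. w \<in> span S \<Longrightarrow> orthogonal z w" "y = a + z"
      using orthogonal_subspace_decomp_exists by metis
    moreover have "span S = S" using S by (simp add: span_eq_iff)
    ultimately show ?thesis by (auto simp: orthogonal_def intro!: exI[of _ a])
  qed
  define p where "p y = (SOME a. a \<in> S \<and> (\<forall>w\<in>S. (y - a) \<bullet> w = 0))" for y
  have p: "p y \<in> S \<and> (\<forall>w\<in>S. (y - p y) \<bullet> w = 0)" for y
    unfolding p_def using someI_ex[OF ex] by blast
  have "linear p"
  proof (rule linearI)
    fix x y
    show "p (x + y) = p x + p y"
    proof (rule proj_unique[OF S, of _ "x + y"])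
      show "p x + p y \<in> S" using p S by (simp add: subspace_add)
      show "\<forall>w\<in>S. (x + y - (p x + p y)) \<bullet> w = 0"
      proof
        fix w assume "w \<in> S"
        then have "(x - p x) \<bullet> w + (y - p y) \<bullet> w = 0" using p by simp
        then show "(x + y - (p x + p y)) \<bullet> w = 0" by (simp add: algebra_simps inner_add_left inner_diff_left)
      qed
    qed (use p in auto)
  next
    fix c :: real and x
    show "p (c *\<^sub>R x) = c *\<^sub>R p x"
    proof (rule proj_unique[OF S, of _ "c *\<^sub>R x"])
      show "c *\<^sub>R p x \<in> S" using p S by (simp add: subspace_scale)
      show "\<forall>w\<in>S. (c *\<^sub>R x - c *\<^sub>R p x) \<bullet> w = 0"
      proof
        fix w assume "w \<in> S"
        then have "(x - p x) \<bullet> w = 0" using p by simp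
        then show "(c *\<^sub>R x - c *\<^sub>R p x) \<bullet> w = 0"
          by (metis inner_scaleR_left mult_zero_right scaleR_right_diff_distrib)
      qed
    qed (use p in auto)
  qed
  then show ?thesis using p by blast
qed

lemma proj_self:
  fixes S :: "'a::euclidean_space set"
  assumes S: "subspace S" and p: "\<forall>y. p y \<in> S \<and> (\<forall>w\<in>S. (y - p y) \<bullet> w = 0)" and y: "y \<in> S"
  shows "p y = y"
  using proj_unique[OF S, of "p y" y y] p y by auto

lemma proj_sym:
  fixes S :: "'a::euclidean_space set"
  assumes S: "subspace S" and p: "\<forall>y. p y \<in> S \<and> (\<forall>w\<in>S. (y - p y) \<bullet> w = 0)"
  shows "p y \<bullet> w = y \<bullet> p w"
proof -
  have "(w - p w) \<bullet> p y = 0" "(y - p y) \<bullet> p w = 0" using p by auto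
  then have "w \<bullet> p y = p w \<bullet> p y" "y \<bullet> p w = p y \<bullet> p w" by (simp_all add: inner_diff_left)
  then show ?thesis by (simp add: inner_commute)
qed

lemma subspace_range_mat: "subspace (range ((*v) (M::real^'n^'m)))"
proof -
  have a: "0 \<in> range ((*v) M)" using matrix_vector_mult_0_right[of M] by (metis rangeI)
  have b: "x + y \<in> range ((*v) M)" if xy: "x \<in> range ((*v) M)" "y \<in> range ((*v) M)" for x y
  proof -
    obtain u v where "x = M *v u" "y = M *v v" using xy by blast
    then have "x + y = M *v (u + v)" by (simp add: matrix_vector_right_distrib)
    then show ?thesis by simp
  qed
  have c: "c *\<^sub>R x \<in> range ((*v) M)" if xr: "x \<in> range ((*v) M)" for c x
  proof -
    obtain u where "x = M *v u" using xr by blast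
    then have "c *\<^sub>R x = M *v (c *\<^sub>R u)" by (simp add: vec.scale scalar_mult_eq_scaleR[symmetric])
    then show ?thesis by simp
  qed
  show ?thesis unfolding subspace_def using a b c by blast
qed

lemma sym_by_inner:
  fixes M :: "real^'n^'n"
  assumes "\<And>x y. (M *v x) \<bullet> y = x \<bullet> (M *v y)"
  shows "transpose M = M"
proof -
  have "transpose M *v y = M *v y" for y
  proof -
    have "x \<bullet> (transpose M *v y - M *v y) = 0" for x
      using assms[of x y] by (simp add: transpose_matrix_vector dot_lmul_matrix[symmetric] inner_diff_right inner_commute)
    from this[of "transpose M *v y - M *v y"] show ?thesis by simp
  qed
  then show ?thesis by (simp add: matrix_eq)
qed

lemma pen_exists: "\<exists>X. pen (A::real^'n^'m) X"
proof -
  define V where "V = range ((*v) (transpose A))"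
  define W where "W = range ((*v) A)"
  have sV: "subspace V" and sW: "subspace W" unfolding V_def W_def by (rule subspace_range_mat)+
  obtain q where ql: "linear q" and q: "\<forall>y. q y \<in> V \<and> (\<forall>w\<in>V. (y - q y) \<bullet> w = 0)"
    using proj_exists[OF sV] by blast
  obtain p where pl: "linear p" and p: "\<forall>y. p y \<in> W \<and> (\<forall>w\<in>W. (y - p y) \<bullet> w = 0)"
    using proj_exists[OF sW] by blast
  have nullV: "A *v x = 0" if "\<forall>w\<in>V. x \<bullet> w = 0" for x
  proof -
    have "(A *v x) \<bullet> (A *v x) = x \<bullet> (transpose A *v (A *v x))"
      by (simp add: transpose_matrix_vector dot_lmul_matrix[symmetric] inner_commute)
    also have "\<dots> = 0" using that V_def by auto
    finally show ?thesis by simp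
  qed
  have inj: "inj_on ((*v) A) V"
  proof (rule inj_onI)
    fix x y assume xy: "x \<in> V" "y \<in> V" "A *v x = A *v y"
    then obtain u where u: "x - y = transpose A *v u" using sV unfolding V_def
      by (metis matrix_vector_mult_diff_distrib rangeE)
    have "(x - y) \<bullet> (x - y) = (A *v (x - y)) \<bullet> u"
      by (simp add: u transpose_matrix_vector dot_lmul_matrix inner_commute)
    also have "\<dots> = 0" using xy by (simp add: matrix_vector_mult_diff_distrib)
    finally show "x = y" by simp
  qed
  obtain g where gV: "range g \<subseteq> V" and gl: "linear g" and g: "\<forall>v\<in>V. g (A *v v) = v"
    using linear_exists_left_inverse_on[OF matrix_vector_mul_linear sV inj] by blast
  have Aq: "A *v q x = A *v x" for x
  proof -
    have "A *v (x - q x) = 0" using q nullV by blast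
    then show ?thesis by (simp add: matrix_vector_mult_diff_distrib)
  qed
  have gA: "g (A *v x) = q x" for x
  proof -
    have "A *v (x - q x) = 0" using q nullV by blast
    then have "A *v x = A *v q x" by (simp add: matrix_vector_mult_diff_distrib)
    then show ?thesis using g q by metis
  qed
  have Agp: "A *v g (p y) = p y" for y
  proof -
    obtain z where z: "p y = A *v z" using p W_def by blast
    have "A *v (z - q z) = 0" using q nullV by blast
    then have "A *v q z = A *v z" by (simp add: matrix_vector_mult_diff_distrib)
    then show ?thesis using z gA by metis
  qed
  define X where "X = matrix (\<lambda>y. g (p y))"
  have gpl: "linear (\<lambda>y. g (p y))" using gl pl by (simp add: linear_compose[unfolded o_def])
  have Xv: "X *v y = g (p y)" for y unfolding X_def using gpl by (simp add: matrix_vector_mul(2)[OF gpl, THEN fun_cong] )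
  have pA: "p (A *v x) = A *v x" for x using proj_self[OF sW p] W_def by blast
  have 1: "A ** X ** A = A"
    by (simp add: matrix_eq matrix_vector_mul_assoc[symmetric] Xv pA gA Agp Aq)
  have 2: "X ** A ** X = X"
    by (simp add: matrix_eq matrix_vector_mul_assoc[symmetric] Xv Agp proj_self[OF sW p] p)
  have 3: "transpose (A ** X) = A ** X"
    by (rule sym_by_inner) (simp add: matrix_vector_mul_assoc[symmetric] Xv Agp proj_sym[OF sW p])
  have 4: "transpose (X ** A) = X ** A"
    by (rule sym_by_inner) (simp add: matrix_vector_mul_assoc[symmetric] Xv pA gA proj_sym[OF sV q])
  show ?thesis using 1 2 3 4 unfolding pen_def by blast
qed

lemma pen_mp: "pen A (mp_inverse A)"
proof -
  obtain X where X: "pen A X" using pen_exists by blast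
  have "pen A (THE X. pen A X)" by (rule theI[of "pen A" X]) (use X pen_unique in blast)+
  then show ?thesis unfolding mp_inverse_def pen_def by simp
qed



lemma sum_mm_right: "finite K \<Longrightarrow> (\<Sum>k\<in>K. f k) ** (C::real^'p^'n) = (\<Sum>k\<in>K. (f k :: real^'n^'m) ** C)"
  by (induction K rule: finite_induct) (auto simp: mm_rdistrib)
lemma sum_mm_left: "finite K \<Longrightarrow> (C::real^'n^'m) ** (\<Sum>k\<in>K. f k) = (\<Sum>k\<in>K. C ** (f k :: real^'p^'n))"
  by (induction K rule: finite_induct) (auto simp: matrix_add_ldistrib)
lemma sum_mv: "finite K \<Longrightarrow> (\<Sum>k\<in>K. f k) *v x = (\<Sum>k\<in>K. (f k :: real^'n^'m) *v x)"
  by (induction K rule: finite_induct) (auto simp: matrix_vector_mult_add_rdistrib)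
lemma vm_add: "(z::real^'m) v* (A + B) = z v* A + z v* (B::real^'n^'m)"
  by (vector vector_matrix_mult_def sum.distrib[symmetric] field_simps)
lemma vm_diff: "(z::real^'m) v* (A - B) = z v* A - z v* (B::real^'n^'m)"
  by (vector vector_matrix_mult_def sum_subtractf[symmetric] field_simps)
lemma sum_vm: "finite K \<Longrightarrow> z v* (\<Sum>k\<in>K. f k) = (\<Sum>k\<in>K. z v* (f k :: real^'n^'m))"
  by (induction K rule: finite_induct) (auto simp: vm_add)
lemma vm_id: "(z::real^'n) v* mat 1 = z"
  by (metis matrix_vector_mul_lid transpose_mat transpose_matrix_vector)

lemma nonneg_mult: "nonneg_mat X \<Longrightarrow> nonneg_mat Y \<Longrightarrow> nonneg_mat ((X::real^'n^'m) ** (Y::real^'p^'n))"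
  unfolding nonneg_mat_def matrix_matrix_mult_def by (auto intro!: sum_nonneg)
lemma nonneg_sum: "(\<And>k. k \<in> K \<Longrightarrow> nonneg_mat (f k)) \<Longrightarrow> nonneg_mat (\<Sum>k\<in>K. (f k :: real^'n^'m))"
  unfolding nonneg_mat_def by (auto simp: sum_component intro!: sum_nonneg)

lemma idem_sym_range_eq:
  fixes P Q :: "real^'n^'n"
  assumes "P ** P = P" "transpose P = P" "Q ** Q = Q" "transpose Q = Q"
    and r: "col_range P = col_range Q"
  shows "P = Q"
proof -
  have QP: "Q ** P = P"
  proof (subst matrix_eq, intro allI)
    fix x
    have "P *v x \<in> col_range Q" using r unfolding col_range_def by auto
    then obtain y where "P *v x = Q *v y" unfolding col_range_def by auto
    then show "Q ** P *v x = P *v x" using assms(3) by (metis matrix_vector_mul_assoc)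
  qed
  have PQ: "P ** Q = Q"
  proof (subst matrix_eq, intro allI)
    fix x
    have "Q *v x \<in> col_range P" using r unfolding col_range_def by auto
    then obtain y where "Q *v x = P *v y" unfolding col_range_def by auto
    then show "P ** Q *v x = Q *v x" using assms(1) by (metis matrix_vector_mul_assoc)
  qed
  have "P = transpose (Q ** P)" using QP assms by simp
  also have "\<dots> = P ** Q" using assms by (simp add: matrix_transpose_mul)
  finally show ?thesis using PQ by simp
qed

lemma idem_sym_null_eq:
  fixes P Q :: "real^'n^'n"
  assumes "P ** P = P" "transpose P = P" "Q ** Q = Q" "transpose Q = Q"
    and r: "null_space P = null_space Q"
  shows "P = Q"
proof -
  have PQ: "P ** Q = P"
  proof (subst matrix_eq, intro allI)
    fix x
    have "Q *v (x - Q *v x) = 0" using assms(3)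
      by (simp add: matrix_vector_mult_diff_distrib matrix_vector_mul_assoc)
    then have "P *v (x - Q *v x) = 0" using r unfolding null_space_def by auto
    then show "P ** Q *v x = P *v x" by (simp add: matrix_vector_mult_diff_distrib matrix_vector_mul_assoc)
  qed
  have QP: "Q ** P = Q"
  proof (subst matrix_eq, intro allI)
    fix x
    have "P *v (x - P *v x) = 0" using assms(1)
      by (simp add: matrix_vector_mult_diff_distrib matrix_vector_mul_assoc)
    then have "Q *v (x - P *v x) = 0" using r unfolding null_space_def by auto
    then show "Q ** P *v x = Q *v x" by (simp add: matrix_vector_mult_diff_distrib matrix_vector_mul_assoc)
  qed
  have "P = transpose (P ** Q)" using PQ assms by simp
  also have "\<dots> = Q ** P" using assms by (simp add: matrix_transpose_mul)
  finally show ?thesis using QP by simp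
qed

lemma pen_facts:
  assumes "pen A X"
  shows "A ** X ** A = A" "X ** A ** X = X" "transpose (A ** X) = A ** X" "transpose (X ** A) = X ** A"
    "A ** X ** (A ** X) = A ** X" "X ** A ** (X ** A) = X ** A"
    "col_range (A ** X) = col_range A" "null_space (X ** A) = null_space A"
proof -
  show a: "A ** X ** A = A" "X ** A ** X = X" "transpose (A ** X) = A ** X" "transpose (X ** A) = X ** A"
    using assms unfolding pen_def by auto
  show "A ** X ** (A ** X) = A ** X" using a by (metis matrix_mul_assoc)
  show "X ** A ** (X ** A) = X ** A" using a by (metis matrix_mul_assoc)
  show "col_range (A ** X) = col_range A"
  proof
    show "col_range (A ** X) \<subseteq> col_range A" unfolding col_range_def
      by (auto simp: matrix_vector_mul_assoc[symmetric])
    show "col_range A \<subseteq> col_range (A ** X)" unfolding col_range_def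
    proof
      fix y assume "y \<in> range ((*v) A)"
      then obtain x where "y = A *v x" by auto
      then have "y = (A ** X) *v (A *v x)" using a by (simp add: matrix_vector_mul_assoc)
      then show "y \<in> range ((*v) (A ** X))" by auto
    qed
  qed
  show "null_space (X ** A) = null_space A"
  proof
    show "null_space A \<subseteq> null_space (X ** A)" unfolding null_space_def
      by (auto simp: matrix_vector_mul_assoc[symmetric])
    show "null_space (X ** A) \<subseteq> null_space A" unfolding null_space_def
    proof
      fix x assume "x \<in> {x. X ** A *v x = 0}"
      then have "A *v x = A *v (X ** A *v x)" using a by (metis matrix_mul_assoc matrix_vector_mul_assoc)
      also have "\<dots> = 0" using \<open>x \<in> _\<close> by simp
      finally show "x \<in> {x. A *v x = 0}" by simp
    qed
  qed
qed

lemma proper_proj: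
  assumes "proper_splitting A U V"
  shows "U ** mp_inverse U = A ** mp_inverse A" "mp_inverse U ** U = mp_inverse A ** A"
proof -
  note u = pen_facts[OF pen_mp[of U]] and a = pen_facts[OF pen_mp[of A]]
  have r: "col_range U = col_range A" and n: "null_space U = null_space A"
    using assms unfolding proper_splitting_def by auto
  show "U ** mp_inverse U = A ** mp_inverse A"
    by (rule idem_sym_range_eq) (use u a r in auto)
  show "mp_inverse U ** U = mp_inverse A ** A"
    by (rule idem_sym_null_eq) (use u a n in auto)
qed



lemma row_mm: "((G::real^'n^'m) ** (X::real^'p^'n)) $ i = G $ i v* X"
  by (vector matrix_matrix_mult_def vector_matrix_mult_def mult.commute)

theorem theorem5p7:
  fixes A :: "real^'n^'m" and p :: nat
    and U V :: "nat \<Rightarrow> real^'n^'m" and E :: "nat \<Rightarrow> real^'n^'n"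
    and H :: "real^'n^'n" and B C :: "real^'n^'m"
  assumes semimono: "nonneg_mat (mp_inverse A)"
    and multi: "proper_weak_regular_multisplitting A p U V E"
    and H_def: "H = multisplitting_H p U V E"
    and B_def: "B = A ** matrix_inv (mat 1 - H)"
    and C_def: "C = B - A"
    and A_nonneg: "nonneg_mat A"
    and rangeE: "\<forall>k<p. col_range (E k) \<subseteq> col_range (transpose A)"
  shows "proper_regular_splitting A B C"
proof -
  define Ad where "Ad = mp_inverse A"
  define P where "P = Ad ** A"
  define Ud where "Ud k = mp_inverse (U k)" for k
  define M where "M = (\<Sum>k<p. E k ** Ud k)"
  define K where "K = (mat 1 :: real^'n^'n) - H"
  have spl: "proper_splitting A (U k) (V k)" and nUd: "nonneg_mat (Ud k)"
    and nUV: "nonneg_mat (Ud k ** V k)" and nE: "nonneg_mat (E k)" and dE: "diagonal_mat (E k)"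
    if "k < p" for k
    using multi that unfolding proper_weak_regular_multisplitting_def proper_weak_regular_splitting_def Ud_def
    by auto
  have sumE: "(\<Sum>k<p. E k) = mat 1"
    using multi unfolding proper_weak_regular_multisplitting_def by auto
  note pa = pen_facts[OF pen_mp[of A], folded Ad_def]
  have AP: "A ** P = A" using pa(1) unfolding P_def by (metis matrix_mul_assoc)
  have PP: "P ** P = P" using pa(6) unfolding P_def .
  have PAd: "P ** Ad = Ad" using pa(2) unfolding P_def .
  have Psym: "transpose P = P" using pa(4) unfolding P_def .
  have UdU: "Ud k ** U k = P" if "k < p" for k
    using proper_proj(2)[OF spl[OF that]] unfolding Ud_def P_def Ad_def .
  have UUd: "U k ** Ud k = A ** Ad" if "k < p" for k
    using proper_proj(1)[OF spl[OF that]] unfolding Ud_def Ad_def .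
  have UdUUd: "Ud k ** U k ** Ud k = Ud k" for k
    using pen_facts(2)[OF pen_mp[of "U k"]] unfolding Ud_def .
  have UdUsym: "transpose (Ud k ** U k) = Ud k ** U k" for k
    using pen_facts(4)[OF pen_mp[of "U k"]] unfolding Ud_def .
  have f1: "Ud k ** V k = P - Ud k ** A" if "k < p" for k
  proof -
    have "V k = U k - A" using spl[OF that] unfolding proper_splitting_def by simp
    then show ?thesis using UdU[OF that] by (simp add: mm_ldiff)
  qed
  have Hsum: "H = (\<Sum>k<p. E k ** (Ud k ** V k))"
    unfolding H_def multisplitting_H_def Ud_def by (simp add: matrix_mul_assoc)
  have Hf: "H = P - M ** A"
  proof -
    have "H = (\<Sum>k<p. E k ** P - E k ** Ud k ** A)"
      unfolding Hsum by (rule sum.cong) (auto simp: f1 mm_ldiff matrix_mul_assoc)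
    also have "\<dots> = (\<Sum>k<p. E k) ** P - M ** A"
      unfolding M_def by (simp add: sum_subtractf sum_mm_right)
    finally show ?thesis using sumE by simp
  qed
  have PE: "P ** E k = E k" if "k < p" for k
  proof (subst matrix_eq, intro allI)
    fix x
    have "E k *v x \<in> col_range (transpose A)" using rangeE that unfolding col_range_def by blast
    then obtain w where w: "E k *v x = transpose A *v w" unfolding col_range_def by auto
    have "transpose (A ** P) = P ** transpose A" by (simp add: matrix_transpose_mul Psym)
    then have PA: "P ** transpose A = transpose A" using AP by simp
    have "P ** E k *v x = P *v (transpose A *v w)" by (simp add: w matrix_vector_mul_assoc[symmetric])
    also have "\<dots> = transpose A *v w" by (simp only: matrix_vector_mul_assoc PA)
    finally show "P ** E k *v x = E k *v x" using w by simp
  qed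
  have PM: "P ** M = M"
    unfolding M_def by (simp add: sum_mm_left matrix_mul_assoc PE)
  have PH: "P ** H = H"
    unfolding Hf by (simp add: mm_ldiff PP matrix_mul_assoc PM)
  have HP: "H ** P = H"
    unfolding Hf by (simp add: mm_rdiff PP AP flip: matrix_mul_assoc)
  have MAAd: "M ** (A ** Ad) = M"
  proof -
    have "M ** (A ** Ad) = (\<Sum>k<p. E k ** Ud k ** (A ** Ad))"
      unfolding M_def by (simp add: sum_mm_right)
    also have "\<dots> = (\<Sum>k<p. E k ** Ud k)"
    proof (rule sum.cong)
      fix k assume "k \<in> {..<p}"
      then have "A ** Ad = U k ** Ud k" using UUd by simp
      then have "E k ** Ud k ** (A ** Ad) = E k ** (Ud k ** U k ** Ud k)"
        by (simp add: matrix_mul_assoc)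
      then show "E k ** Ud k ** (A ** Ad) = E k ** Ud k" using UdUUd by simp
    qed simp
    finally show ?thesis unfolding M_def .
  qed
  have KAd: "K ** Ad = M"
  proof -
    have "K ** Ad = Ad - P ** Ad + M ** (A ** Ad)"
      unfolding K_def Hf by (simp add: mm_rdiff mm_rdistrib matrix_mul_assoc)
    then show ?thesis using PAd MAAd by simp
  qed
  have nM: "nonneg_mat M" unfolding M_def
    by (rule nonneg_sum) (auto intro: nonneg_mult nE nUd)
  have nH: "nonneg_mat H" unfolding Hsum
    by (rule nonneg_sum) (auto intro: nonneg_mult nE nUV)
  have Esym: "transpose (E k) = E k" if "k < p" for k
  proof -
    have "E k $ j $ i = E k $ i $ j" for i j
      using dE[OF that] unfolding diagonal_mat_def by (cases "i = j") auto
    then show ?thesis by (simp add: transpose_def vec_eq_iff)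
  qed
  have vmK: "z v* K = z - z v* H" for z
    unfolding K_def by (simp add: vm_diff vm_id)
  have keyL: "z = 0" if z0: "\<forall>j. 0 \<le> z $ j" and zH: "\<forall>j. z $ j \<le> (z v* H) $ j" for z
  proof -
    define w where "w = z v* K"
    have wn: "w $ j \<le> 0" for j using zH unfolding w_def vmK by simp
    have zM: "z v* M = w v* Ad" unfolding w_def KAd[symmetric] by (simp add: vector_matrix_mul_assoc)
    have le0: "(w v* Ad) $ j \<le> 0" for j
      unfolding vector_matrix_mult_def using semimono wn
      unfolding Ad_def nonneg_mat_def by (auto intro!: sum_nonpos mult_nonpos_nonneg)
    have le: "(z v* M) $ j \<le> 0" for j using le0 zM by simp
    have term_nn: "0 \<le> (z v* (E k ** Ud k)) $ j" if "k < p" for k j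
      using nonneg_mult[OF nE[OF that] nUd[OF that]] z0 unfolding nonneg_mat_def vector_matrix_mult_def
      by (auto intro!: sum_nonneg)
    have zMs: "(z v* M) $ j = (\<Sum>k<p. (z v* (E k ** Ud k)) $ j)" for j
      unfolding M_def by (simp add: sum_vm sum_component)
    have terms0: "z v* (E k ** Ud k) = 0" if "k < p" for k
    proof -
      have "(z v* (E k ** Ud k)) $ j = 0" for j
      proof -
        have "0 \<le> (\<Sum>k<p. (z v* (E k ** Ud k)) $ j)"
          by (rule sum_nonneg) (use term_nn in auto)
        then have "(\<Sum>k<p. (z v* (E k ** Ud k)) $ j) = 0"
          using le[of j] zMs[of j] by linarith
        then have "\<forall>k'\<in>{..<p}. (z v* (E k' ** Ud k')) $ j = 0"
          by (subst (asm) sum_nonneg_eq_0_iff) (auto intro: term_nn)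
        then show ?thesis using that by simp
      qed
      then show ?thesis by (simp add: vec_eq_iff)
    qed
    have Ez: "E k *v z = 0" if "k < p" for k
    proof -
      define u where "u = E k *v z"
      have uU: "u v* Ud k = 0"
      proof -
        have "u = transpose (E k) *v z" unfolding u_def using Esym[OF that] by simp
        then have "u = z v* E k" by (simp only: transpose_matrix_vector)
        then show ?thesis using terms0[OF that] by (simp add: vector_matrix_mul_assoc)
      qed
      have "u \<in> col_range (transpose A)" using rangeE that unfolding u_def col_range_def by blast
      then obtain w' where w': "u = transpose A *v w'" unfolding col_range_def by auto
      have "(Ud k ** U k) *v u = transpose (Ud k ** U k) *v u" using UdUsym[of k] by simp
      also have "\<dots> = u v* (Ud k ** U k)" by (simp only: transpose_matrix_vector)
      also have "\<dots> = 0" by (simp add: vector_matrix_mul_assoc[symmetric] uU)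
      finally have "(Ud k ** U k) *v u = 0" .
      have "A ** (Ud k ** U k) = A" using AP UdU[OF that] by simp
      then have "A *v u = A *v ((Ud k ** U k) *v u)" by (simp add: matrix_vector_mul_assoc)
      then have Au: "A *v u = 0" using \<open>(Ud k ** U k) *v u = 0\<close> by simp
      have "u \<bullet> u = (w' v* A) \<bullet> u" using w' by (simp add: transpose_matrix_vector)
      also have "\<dots> = 0" by (simp add: dot_lmul_matrix Au)
      finally show ?thesis unfolding u_def by simp
    qed
    have "z = (\<Sum>k<p. E k) *v z" using sumE by simp
    also have "\<dots> = 0" by (simp add: sum_mv Ez)
    finally show ?thesis .
  qed
  have injT: "y = 0" if "transpose K *v y = 0" for y
  proof -
    have "y v* K = 0" using that by (simp add: transpose_matrix_vector)
    then have yH: "y = y v* H" using vmK by simp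
    define z where "z = (\<chi> j. \<bar>y $ j\<bar>)"
    have "z $ j \<le> (z v* H) $ j" for j
    proof -
      have "y $ j = (y v* H) $ j" using yH by simp
      then have "z $ j = \<bar>(\<Sum>i\<in>UNIV. H $ i $ j * y $ i)\<bar>"
        unfolding z_def by (simp add: vector_matrix_mult_def mult.commute)
      also have "\<dots> \<le> (\<Sum>i\<in>UNIV. \<bar>H $ i $ j * y $ i\<bar>)" by (rule sum_abs)
      also have "\<dots> = (\<Sum>i\<in>UNIV. H $ i $ j * z $ i)"
        using nH unfolding nonneg_mat_def z_def by (simp add: abs_mult)
      also have "\<dots> = (z v* H) $ j" by (simp add: vector_matrix_mult_def mult.commute)
      finally show ?thesis .
    qed
    then have "z = 0" using keyL[of z] unfolding z_def by simp
    then show ?thesis unfolding z_def by (simp add: vec_eq_iff)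
  qed
  have invK: "invertible K"
  proof -
    have "\<exists>B. B ** transpose K = mat 1" using injT by (simp add: matrix_left_invertible_ker)
    then have "invertible (transpose K)" by (simp add: invertible_left_inverse)
    then show ?thesis using transpose_invertible by fastforce
  qed
  define G where "G = matrix_inv K"
  have GK: "G ** K = mat 1" and KG: "K ** G = mat 1"
  proof -
    have "\<exists>A'. K ** A' = mat 1 \<and> A' ** K = mat 1" using invK unfolding invertible_def .
    then have "K ** G = mat 1 \<and> G ** K = mat 1" unfolding G_def matrix_inv_def by (rule someI_ex)
    then show "G ** K = mat 1" "K ** G = mat 1" by auto
  qed
  have nG: "nonneg_mat G" unfolding nonneg_mat_def
  proof (intro allI)
    fix i j
    define r where "r = G $ i"
    have rK: "r v* K = mat 1 $ i" unfolding r_def using GK row_mm[of G K i] by simp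
    have rK2: "r - r v* H = mat 1 $ i" using rK vmK by simp
    have rr: "r $ l = (r v* H) $ l + (mat 1 :: real^'n^'n) $ i $ l" for l
    proof -
      have "(r - r v* H) $ l = (mat 1 :: real^'n^'n) $ i $ l" using rK2 by simp
      then show ?thesis by simp
    qed
    define z where "z = (\<chi> l. max (- (r $ l)) 0)"
    have "z $ l \<le> (z v* H) $ l" for l
    proof -
      have zHn: "0 \<le> (z v* H) $ l"
        using nH unfolding nonneg_mat_def vector_matrix_mult_def z_def by (auto intro!: sum_nonneg)
      show ?thesis
      proof (cases "0 \<le> r $ l")
        case True then show ?thesis using zHn unfolding z_def by simp
      next
        case False
        have d: "0 \<le> (mat 1 :: real^'n^'n) $ i $ l" by (simp add: mat_def)
        have "z $ l = - r $ l" using False unfolding z_def by simp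
        also have "\<dots> \<le> - (r v* H) $ l" using rr[of l] d by linarith
        also have "\<dots> = (\<Sum>m\<in>UNIV. H $ m $ l * (- r $ m))"
          by (simp add: vector_matrix_mult_def sum_negf mult.commute)
        also have "\<dots> \<le> (\<Sum>m\<in>UNIV. H $ m $ l * z $ m)"
        proof (rule sum_mono)
          fix m
          have "- r $ m \<le> z $ m" unfolding z_def by simp
          moreover have "0 \<le> H $ m $ l" using nH unfolding nonneg_mat_def by simp
          ultimately show "H $ m $ l * (- r $ m) \<le> H $ m $ l * z $ m" by (rule mult_left_mono)
        qed
        also have "\<dots> = (z v* H) $ l" by (simp add: vector_matrix_mult_def mult.commute)
        finally show ?thesis .
      qed
    qed
    then have "z = 0" using keyL[of z] unfolding z_def by simp
    then have "z $ j = 0" by simp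
    then have "max (- (r $ j)) 0 = 0" unfolding z_def by simp
    then show "0 \<le> G $ i $ j" unfolding r_def by simp
  qed
  have BG: "B = A ** G" unfolding B_def G_def K_def ..
  have AeqBK: "A = B ** K" unfolding BG using GK by (simp flip: matrix_mul_assoc)
  have CB: "C = B ** H"
  proof -
    have "B ** K = B - B ** H" unfolding K_def by (simp add: mm_ldiff)
    then have "A = B - B ** H" using AeqBK by simp
    then show ?thesis unfolding C_def by simp
  qed
  have nB: "nonneg_mat B" unfolding BG by (rule nonneg_mult[OF A_nonneg nG])
  have nC: "nonneg_mat C" unfolding CB by (rule nonneg_mult[OF nB nH])
  have Kfix: "K *v x = x" if "A *v x = 0" for x
  proof -
    have "H *v x = (H ** P) *v x" using HP by simp
    then have "H *v x = H *v (Ad *v (A *v x))" unfolding P_def by (simp add: matrix_vector_mul_assoc)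
    then have "H *v x = 0" using that by simp
    then show ?thesis unfolding K_def by (simp add: matrix_vector_mult_diff_rdistrib)
  qed
  have rangeB: "col_range B = col_range A"
  proof
    show "col_range B \<subseteq> col_range A" unfolding col_range_def BG
      by (auto simp: matrix_vector_mul_assoc[symmetric])
    show "col_range A \<subseteq> col_range B" unfolding col_range_def
    proof
      fix y assume "y \<in> range ((*v) A)"
      then obtain x where "y = A *v x" by auto
      then have "y = B *v (K *v x)" using AeqBK by (simp add: matrix_vector_mul_assoc)
      then show "y \<in> range ((*v) B)" by auto
    qed
  qed
  have nullB: "null_space B = null_space A"
  proof
    show "null_space A \<subseteq> null_space B" unfolding null_space_def
    proof
      fix x assume "x \<in> {x. A *v x = 0}"
      then have Ax: "A *v x = 0" by simp
      have "G *v x = G *v (K *v x)" using Kfix[OF Ax] by simp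
      also have "\<dots> = x" using GK by (simp add: matrix_vector_mul_assoc)
      finally have "B *v x = A *v x" unfolding BG by (simp add: matrix_vector_mul_assoc[symmetric])
      then show "x \<in> {x. B *v x = 0}" using Ax by simp
    qed
    show "null_space B \<subseteq> null_space A" unfolding null_space_def
    proof
      fix x assume "x \<in> {x. B *v x = 0}"
      then have "A *v (G *v x) = 0" unfolding BG by (simp add: matrix_vector_mul_assoc)
      then have "K *v (G *v x) = G *v x" by (rule Kfix)
      then have "x = G *v x" using KG by (simp add: matrix_vector_mul_assoc)
      then show "x \<in> {x. A *v x = 0}" using \<open>A *v (G *v x) = 0\<close> by simp
    qed
  qed
  have BM: "B ** M = A ** Ad"
  proof -
    have "B ** M = A ** (G ** K) ** Ad" unfolding BG KAd[symmetric] by (simp add: matrix_mul_assoc)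
    then show ?thesis using GK by simp
  qed
  have KP: "K ** P = P ** K" unfolding K_def by (simp add: mm_rdiff mm_ldiff HP PH)
  have MB: "M ** B = P"
  proof -
    have "M ** B = K ** P ** G" unfolding KAd[symmetric] BG P_def by (simp add: matrix_mul_assoc)
    also have "\<dots> = P ** (K ** G)" using KP by (simp add: matrix_mul_assoc)
    finally show ?thesis using KG by simp
  qed
  have penB: "pen B M"
    unfolding pen_def
  proof (intro conjI)
    show "B ** M ** B = B"
    proof -
      have "B ** M ** B = A ** Ad ** B" using BM by simp
      also have "\<dots> = (A ** Ad ** A) ** G" unfolding BG by (simp add: matrix_mul_assoc)
      also have "\<dots> = B" using pa(1) BG by simp
      finally show ?thesis .
    qed
    show "M ** B ** M = M"
    proof -
      have "M ** B ** M = P ** (K ** Ad)" unfolding MB KAd ..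
      also have "\<dots> = K ** (P ** Ad)" using KP by (simp add: matrix_mul_assoc)
      finally show ?thesis using PAd KAd by simp
    qed
    show "transpose (B ** M) = B ** M" unfolding BM using pa(3) .
    show "transpose (M ** B) = M ** B" unfolding MB using Psym .
  qed
  have "mp_inverse B = M" using pen_unique[OF pen_mp penB] .
  then have nBd: "nonneg_mat (mp_inverse B)" using nM by simp
  show ?thesis unfolding proper_regular_splitting_def proper_splitting_def
    using C_def rangeB nullB nBd nC by simp
qed

end
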